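(* Let $(X,d,A)$ be a metric pair. A set $S\subset(\overline{D}_\infty(X,A),W_\infty)$ is totally bounded if and only if $S$ is uniformly upper finite and upper totally bounded. For $p\in[1,\infty)$, a set $S\subset(\overline{D}_p(X,A),W_p)$ is totally bounded if and only if $S$ is uniformly upper finite, upper totally bounded, and uniformly $p$-vanishing.
   Context: A metric on $X$ is a map $d:X\times X\to[0,\infty]$ with $d(x,x)=0$, symmetry and the triangle inequality (infinite distances allowed, $d(x,y)=0$ need not imply $x=y$); a metric pair $(X,d,A)$ is such a space with a closed subset $A$. Write $d(x,A)=\inf_{a\in A}d(x,a)$, $A^\delta=\{x:d(x,A)<\delta\}$ for $\delta\in(0,\infty]$. $\overline{D}(X,A)$ is the set of countable formal sums $\hat\alpha=\sum_{i\in I}x_i$ of points of $X\setminus A$ (repetitions allowed); $0$ the empty sum; $|\alpha|=|I|$; the support of $\alpha$ is the set of points appearing in $\hat\alpha$. A matching of $\hat\alpha=\sum_{i\in I}x_i$, $\hat\beta=\sum_{j\in J}y_j$ is a formal sum $\sum_{k\in K}(x_k,y_{\varphi(k)})+\sum_{i\in I\setminus K}(x_i,z_i)+\sum_{j\in J\setminus\varphi(K)}(w_j,y_j)$ with $K\subset I$, $\varphi$ injective, $z_i,w_j\in A$; its $p$-cost is the $\ell^p$ norm (sup norm if $p=\infty$) of the distances of paired points; $W_p$ is the infimum of $p$-costs. $u_\delta(\alpha)$, $\ell_\delta(\alpha)$ are the restrictions of $\hat\alpha$ to $X\setminus A^\delta$ and to $A^\delta\setminus A$. For $p<\infty$, $\overline{D}_p(X,A)=\{\alpha: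 |u_\infty(\alpha)|<\infty,\ W_p(\ell_\infty(\alpha),0)<\infty\}$; $\overline{D}_\infty(X,A)=\{\alpha:|u_\delta(\alpha)|<\infty\ \forall\delta>0\}$. A subset $T$ of a metric space is totally bounded if for each $\varepsilon>0$ there is a finite set $\{t_1,\dots,t_n\}\subset T$ with $T\subset\bigcup_i B_\varepsilon(t_i)$. For $S\subset\overline{D}(X,A)$: $S$ is uniformly upper finite if for every $\varepsilon>0$ there is $M_\varepsilon\ge0$ with $|u_\varepsilon(\alpha)|\le M_\varepsilon$ for all $\alpha\in S$; $S$ is upper totally bounded if for every $\varepsilon>0$ the set $u_\varepsilon(S)=\bigcup_{\alpha\in S}\mathrm{supp}(u_\varepsilon(\alpha))\subset X$ is totally bounded in $(X,d)$; $S$ is uniformly $p$-vanishing if for every $\varepsilon>0$ there is $\delta>0$ with $W_p(\ell_\delta(\alpha),0)<\varepsilon$ for all $\alpha\in S$. *)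

theory Defs
  imports "HOL-Analysis.Analysis"
begin

definition ext_metric :: "('a \<Rightarrow> 'a \<Rightarrow> ennreal) \<Rightarrow> bool" where
  "ext_metric d \<longleftrightarrow> (\<forall>x. d x x = 0) \<and> (\<forall>x y. d x y = d y x)
      \<and> (\<forall>x y z. d x z \<le> d x y + d y z)"

definition setdist :: "('a \<Rightarrow> 'a \<Rightarrow> ennreal) \<Rightarrow> 'a \<Rightarrow> 'a set \<Rightarrow> ennreal" where
  "setdist d x A = (INF a\<in>A. d x a)"

definition d_closed :: "('a \<Rightarrow> 'a \<Rightarrow> ennreal) \<Rightarrow> 'a set \<Rightarrow> bool" where
  "d_closed d A \<longleftrightarrow> (\<forall>x. setdist d x A = 0 \<longrightarrow> x \<in> A)"

definition metric_pair :: "('a \<Rightarrow> 'a \<Rightarrow> ennreal) \<Rightarrow> 'a set \<Rightarrow> bool" where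
  "metric_pair d A \<longleftrightarrow> ext_metric d \<and> d_closed d A"

definition nbhd :: "('a \<Rightarrow> 'a \<Rightarrow> ennreal) \<Rightarrow> 'a set \<Rightarrow> ennreal \<Rightarrow> 'a set" where
  "nbhd d A \<delta> = {x. setdist d x A < \<delta>}"

definition totally_bounded_wrt :: "('b \<Rightarrow> 'b \<Rightarrow> ennreal) \<Rightarrow> 'b set \<Rightarrow> bool" where
  "totally_bounded_wrt \<rho> T \<longleftrightarrow>
     (\<forall>\<epsilon>::real. \<epsilon> > 0 \<longrightarrow> (\<exists>F. finite F \<and> F \<subseteq> T \<and>
        T \<subseteq> (\<Union>t\<in>F. {s. \<rho> t s < ennreal \<epsilon>})))"

text \<open>A countable formal sum \<Sum>_{i\<in>I} x_i is represented by an index set I \<subseteq> nat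
  (every countable index set can be reindexed into nat) together with x :: nat \<Rightarrow> 'a.\<close>
type_synonym 'a diag = "nat set \<times> (nat \<Rightarrow> 'a)"

definition diagrams :: "'a set \<Rightarrow> 'a diag set" where
  "diagrams A = {(I, x). \<forall>i\<in>I. x i \<notin> A}"

definition zero_diag :: "'a diag" where
  "zero_diag = ({}, (\<lambda>_. undefined))"

definition supp :: "'a diag \<Rightarrow> 'a set" where
  "supp \<alpha> = snd \<alpha> ` fst \<alpha>"

definition upper :: "('a \<Rightarrow> 'a \<Rightarrow> ennreal) \<Rightarrow> 'a set \<Rightarrow> ennreal \<Rightarrow> 'a diag \<Rightarrow> 'a diag" where
  "upper d A \<delta> \<alpha> = ({i\<in>fst \<alpha>. snd \<alpha> i \<notin> nbhd d A \<delta>}, snd \<alpha>)"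

definition lower :: "('a \<Rightarrow> 'a \<Rightarrow> ennreal) \<Rightarrow> 'a set \<Rightarrow> ennreal \<Rightarrow> 'a diag \<Rightarrow> 'a diag" where
  "lower d A \<delta> \<alpha> = ({i\<in>fst \<alpha>. snd \<alpha> i \<in> nbhd d A \<delta> - A}, snd \<alpha>)"

definition is_matching :: "'a set \<Rightarrow> 'a diag \<Rightarrow> 'a diag \<Rightarrow> nat set \<Rightarrow> (nat \<Rightarrow> nat)
    \<Rightarrow> (nat \<Rightarrow> 'a) \<Rightarrow> (nat \<Rightarrow> 'a) \<Rightarrow> bool" where
  "is_matching A \<alpha> \<beta> K \<phi> z w \<longleftrightarrow>
     K \<subseteq> fst \<alpha> \<and> inj_on \<phi> K \<and> \<phi> ` K \<subseteq> fst \<beta> \<and>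
     (\<forall>i\<in>fst \<alpha> - K. z i \<in> A) \<and> (\<forall>j\<in>fst \<beta> - \<phi> ` K. w j \<in> A)"

definition enn_powr :: "ennreal \<Rightarrow> real \<Rightarrow> ennreal" where
  "enn_powr e p = (if e = top then top else ennreal (enn2real e powr p))"

definition cost_p :: "('a \<Rightarrow> 'a \<Rightarrow> ennreal) \<Rightarrow> real \<Rightarrow> 'a diag \<Rightarrow> 'a diag \<Rightarrow> nat set
    \<Rightarrow> (nat \<Rightarrow> nat) \<Rightarrow> (nat \<Rightarrow> 'a) \<Rightarrow> (nat \<Rightarrow> 'a) \<Rightarrow> ennreal" where
  "cost_p d p \<alpha> \<beta> K \<phi> z w = enn_powr
     ((\<Sum>\<^sub>\<infinity>k\<in>K. enn_powr (d (snd \<alpha> k) (snd \<beta> (\<phi> k))) p)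
      + (\<Sum>\<^sub>\<infinity>i\<in>fst \<alpha> - K. enn_powr (d (snd \<alpha> i) (z i)) p)
      + (\<Sum>\<^sub>\<infinity>j\<in>fst \<beta> - \<phi> ` K. enn_powr (d (w j) (snd \<beta> j)) p)) (1 / p)"

definition cost_inf :: "('a \<Rightarrow> 'a \<Rightarrow> ennreal) \<Rightarrow> 'a diag \<Rightarrow> 'a diag \<Rightarrow> nat set
    \<Rightarrow> (nat \<Rightarrow> nat) \<Rightarrow> (nat \<Rightarrow> 'a) \<Rightarrow> (nat \<Rightarrow> 'a) \<Rightarrow> ennreal" where
  "cost_inf d \<alpha> \<beta> K \<phi> z w =
     sup (sup (SUP k\<in>K. d (snd \<alpha> k) (snd \<beta> (\<phi> k)))
              (SUP i\<in>fst \<alpha> - K. d (snd \<alpha> i) (z i)))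
         (SUP j\<in>fst \<beta> - \<phi> ` K. d (w j) (snd \<beta> j))"

definition W_p :: "('a \<Rightarrow> 'a \<Rightarrow> ennreal) \<Rightarrow> 'a set \<Rightarrow> real \<Rightarrow> 'a diag \<Rightarrow> 'a diag \<Rightarrow> ennreal" where
  "W_p d A p \<alpha> \<beta> = (INF m\<in>{(K, \<phi>, z, w). is_matching A \<alpha> \<beta> K \<phi> z w}.
      (case m of (K, \<phi>, z, w) \<Rightarrow> cost_p d p \<alpha> \<beta> K \<phi> z w))"

definition W_inf :: "('a \<Rightarrow> 'a \<Rightarrow> ennreal) \<Rightarrow> 'a set \<Rightarrow> 'a diag \<Rightarrow> 'a diag \<Rightarrow> ennreal" where
  "W_inf d A \<alpha> \<beta> = (INF m\<in>{(K, \<phi>, z, w). is_matching A \<alpha> \<beta> K \<phi> z w}.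
      (case m of (K, \<phi>, z, w) \<Rightarrow> cost_inf d \<alpha> \<beta> K \<phi> z w))"

definition D_p :: "('a \<Rightarrow> 'a \<Rightarrow> ennreal) \<Rightarrow> 'a set \<Rightarrow> real \<Rightarrow> 'a diag set" where
  "D_p d A p = {\<alpha>\<in>diagrams A. finite (fst (upper d A top \<alpha>))
                  \<and> W_p d A p (lower d A top \<alpha>) zero_diag < top}"

definition D_inf :: "('a \<Rightarrow> 'a \<Rightarrow> ennreal) \<Rightarrow> 'a set \<Rightarrow> 'a diag set" where
  "D_inf d A = {\<alpha>\<in>diagrams A. \<forall>\<delta>>0. finite (fst (upper d A \<delta> \<alpha>))}"

definition unif_upper_finite :: "('a \<Rightarrow> 'a \<Rightarrow> ennreal) \<Rightarrow> 'a set \<Rightarrow> 'a diag set \<Rightarrow> bool" where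
  "unif_upper_finite d A S \<longleftrightarrow> (\<forall>\<epsilon>::real. \<epsilon> > 0 \<longrightarrow> (\<exists>M::nat. \<forall>\<alpha>\<in>S.
      finite (fst (upper d A (ennreal \<epsilon>) \<alpha>)) \<and> card (fst (upper d A (ennreal \<epsilon>) \<alpha>)) \<le> M))"

definition upper_tot_bounded :: "('a \<Rightarrow> 'a \<Rightarrow> ennreal) \<Rightarrow> 'a set \<Rightarrow> 'a diag set \<Rightarrow> bool" where
  "upper_tot_bounded d A S \<longleftrightarrow> (\<forall>\<epsilon>::real. \<epsilon> > 0 \<longrightarrow>
      totally_bounded_wrt d (\<Union>\<alpha>\<in>S. supp (upper d A (ennreal \<epsilon>) \<alpha>)))"

definition unif_p_vanishing :: "('a \<Rightarrow> 'a \<Rightarrow> ennreal) \<Rightarrow> 'a set \<Rightarrow> real \<Rightarrow> 'a diag set \<Rightarrow> bool" where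
  "unif_p_vanishing d A p S \<longleftrightarrow> (\<forall>\<epsilon>::real. \<epsilon> > 0 \<longrightarrow> (\<exists>\<delta>::real. \<delta> > 0 \<and> (\<forall>\<alpha>\<in>S.
      W_p d A p (lower d A (ennreal \<delta>) \<alpha>) zero_diag < ennreal \<epsilon>)))"

end

theory Submission
  imports Defs
begin


lemma em_refl: "ext_metric d \<Longrightarrow> d x x = 0" by (simp add: ext_metric_def)
lemma em_sym: "ext_metric d \<Longrightarrow> d x y = d y x" by (simp add: ext_metric_def)
lemma em_tri: "ext_metric d \<Longrightarrow> d x z \<le> d x y + d y z" by (simp add: ext_metric_def)

lemma setdist_le: "a \<in> A \<Longrightarrow> setdist d x A \<le> d x a"
  unfolding setdist_def by (rule INF_lower)

lemma setdist_lessD: "setdist d x A < c \<Longrightarrow> \<exists>a\<in>A. d x a < c"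
  unfolding setdist_def by (simp add: INF_less_iff)

lemma INF_const_add_ennreal:
  fixes f :: "'b \<Rightarrow> ennreal"
  assumes "A \<noteq> {}"
  shows "(INF a\<in>A. c + f a) = c + (INF a\<in>A. f a)"
  using continuous_at_Inf_mono[of "\<lambda>x. c + x" "f`A"]
  using continuous_add[of "at_right (Inf (f ` A))", of "\<lambda>x. c" "\<lambda>x. x"] assms
  by (auto simp: mono_def image_comp add_left_mono)

lemma setdist_tri:
  assumes "ext_metric d"
  shows "setdist d x A \<le> d x y + setdist d y A"
proof (cases "A = {}")
  case True thus ?thesis by (simp add: setdist_def)
next
  case False
  have "setdist d x A \<le> (INF a\<in>A. d x y + d y a)"
    unfolding setdist_def
    by (rule INF_mono) (use em_tri[OF assms] in blast)
  also have "\<dots> = d x y + setdist d y A"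
    unfolding setdist_def by (rule INF_const_add_ennreal[OF False])
  finally show ?thesis .
qed

lemma ep_ennreal: "r \<ge> 0 \<Longrightarrow> enn_powr (ennreal r) p = ennreal (r powr p)"
  by (simp add: enn_powr_def)

lemma ep_top[simp]: "enn_powr top p = top" by (simp add: enn_powr_def)

lemma ep_top_iff: "enn_powr e p = top \<longleftrightarrow> e = top"
  by (simp add: enn_powr_def)

lemma ep_mono: assumes "a \<le> b" "p \<ge> 0" shows "enn_powr a p \<le> enn_powr b p"
proof (cases "b = top")
  case True thus ?thesis by simp
next
  case False
  then obtain s where s: "b = ennreal s" "s \<ge> 0" by (cases b) auto
  with assms obtain r where r: "a = ennreal r" "r \<ge> 0" "r \<le> s"
    by (cases a) (auto simp: ennreal_le_iff top_unique)
  show ?thesis using r s assms by (simp add: ep_ennreal powr_mono2)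
qed

lemma cost_lt_iff:
  assumes "p > 0" "e > 0"
  shows "enn_powr s (1/p) < ennreal e \<longleftrightarrow> s < ennreal (e powr p)"
proof (cases "s = top")
  case True thus ?thesis by simp
next
  case False
  then obtain r where r: "s = ennreal r" "r \<ge> 0" by (cases s) auto
  have "r powr (1/p) < e \<longleftrightarrow> r < e powr p"
  proof
    assume "r powr (1/p) < e"
    hence "(r powr (1/p)) powr p < e powr p" using assms r by (intro powr_less_mono2) auto
    thus "r < e powr p" using assms r by (simp add: powr_powr)
  next
    assume "r < e powr p"
    hence "r powr (1/p) < (e powr p) powr (1/p)" using assms r by (intro powr_less_mono2) auto
    thus "r powr (1/p) < e" using assms r by (simp add: powr_powr)
  qed
  thus ?thesis using r assms by (simp add: ep_ennreal ennreal_less_iff)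
qed

lemma pow_lt_iff:
  assumes "p > 0" "e > 0"
  shows "enn_powr x p < ennreal (e powr p) \<longleftrightarrow> x < ennreal e"
proof (cases "x = top")
  case True thus ?thesis by simp
next
  case False
  then obtain r where r: "x = ennreal r" "r \<ge> 0" by (cases x) auto
  have "r powr p < e powr p \<longleftrightarrow> r < e"
    using assms r by (metis powr_less_mono2 linorder_not_le order_le_less powr_mono2 order.strict_trans1 less_eq_real_def)
  thus ?thesis using r assms by (simp add: ep_ennreal ennreal_less_iff)
qed

lemma pow_le:
  assumes "p \<ge> 0" "e \<ge> 0" "x \<le> ennreal e"
  shows "enn_powr x p \<le> ennreal (e powr p)"
  using ep_mono[OF assms(3) assms(1)] assms by (simp add: ep_ennreal)

lemma pow_ge:
  assumes "p \<ge> 0" "e \<ge> 0" "ennreal e \<le> x"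
  shows "ennreal (e powr p) \<le> enn_powr x p"
  using ep_mono[OF assms(3) assms(1)] assms by (simp add: ep_ennreal)

lemma pow_tri:
  assumes "p > 0"
  shows "enn_powr (a + b) p \<le> ennreal (2 powr p) * (enn_powr a p + enn_powr b p)"
proof (cases "a = top \<or> b = top")
  case True
  hence "enn_powr a p + enn_powr b p = top" by (auto simp: ep_top_iff)
  moreover have "ennreal (2 powr p) * top = top" by (simp add: ennreal_mult_top)
  ultimately show ?thesis by (metis top_greatest)
next
  case False
  then obtain r s where rs: "a = ennreal r" "r \<ge> 0" "b = ennreal s" "s \<ge> 0"
    by (metis ennreal_cases)
  have "(r + s) powr p \<le> (2 * max r s) powr p"
    using rs assms by (intro powr_mono2) auto
  also have "\<dots> = 2 powr p * (max r s) powr p" using rs by (simp add: powr_mult)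
  also have "\<dots> \<le> 2 powr p * (r powr p + s powr p)"
    by (intro mult_left_mono) (auto simp: max_def)
  finally have *: "(r + s) powr p \<le> 2 powr p * (r powr p + s powr p)" .
  have "enn_powr (a + b) p = ennreal ((r+s) powr p)"
    using rs by (simp add: ep_ennreal flip: ennreal_plus)
  also have "\<dots> \<le> ennreal (2 powr p * (r powr p + s powr p))" using * by (rule ennreal_leI)
  also have "\<dots> = ennreal (2 powr p) * (enn_powr a p + enn_powr b p)"
    using rs by (simp add: ep_ennreal ennreal_mult ennreal_plus)
  finally show ?thesis .
qed




lemma ennreal_add_lt:
  assumes "a < ennreal x" "b < ennreal y"
  shows "a + b < ennreal (x + y)"
proof -
  obtain r where r: "a = ennreal r" "r \<ge> 0" using assms(1) by (cases a) auto
  obtain s where s: "b = ennreal s" "s \<ge> 0" using assms(2) by (cases b) auto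
  have "r < x" "s < y" using assms r s by (auto simp: ennreal_less_iff)
  thus ?thesis using r s by (simp add: ennreal_less_iff flip: ennreal_plus)
qed

lemma ennreal_add_le_lt:
  assumes "a \<le> ennreal x" "b < ennreal y" "x \<ge> 0"
  shows "a + b < ennreal (x + y)"
proof -
  obtain r where r: "a = ennreal r" "r \<ge> 0" using assms(1) by (cases a) (auto simp: top_unique)
  obtain s where s: "b = ennreal s" "s \<ge> 0" using assms(2) by (cases b) auto
  have "r \<le> x" "s < y" using assms r s by (auto simp: ennreal_less_iff ennreal_le_iff)
  thus ?thesis using r s assms by (simp add: ennreal_less_iff flip: ennreal_plus)
qed

lemma summ_enn[simp]: "(f::'b \<Rightarrow> ennreal) summable_on A"
  by (rule nonneg_summable_on_complete) simp

lemma infsum_subset_ennreal: "B \<subseteq> A \<Longrightarrow> infsum (f::'b \<Rightarrow> ennreal) B \<le> infsum f A"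
  by (rule infsum_mono_neutral) auto

lemma infsum_mono_ennreal: "(\<And>x. x \<in> A \<Longrightarrow> f x \<le> g x) \<Longrightarrow> infsum (f::'b \<Rightarrow> ennreal) A \<le> infsum g A"
  by (rule infsum_mono) auto

lemma term_le_infsum: "k \<in> A \<Longrightarrow> (f::'b \<Rightarrow> ennreal) k \<le> infsum f A"
  using infsum_subset_ennreal[of "{k}" A f] by simp

lemma infsum_Un_le: "infsum (f::'b \<Rightarrow> ennreal) (A \<union> B) \<le> infsum f A + infsum f B"
proof (rule infsum_le_finite_sums)
  show "f summable_on A \<union> B" by simp
  fix F assume F: "finite F" "F \<subseteq> A \<union> B"
  have "sum f F = sum f (F \<inter> A) + sum f (F - A)"
    using F(1) by (metis sum.Int_Diff)
  also have "\<dots> \<le> infsum f A + infsum f B"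
  proof (intro add_mono)
    show "sum f (F \<inter> A) \<le> infsum f A"
      using F infsum_subset_ennreal[of "F \<inter> A" A f] by simp
    show "sum f (F - A) \<le> infsum f B"
      using F infsum_subset_ennreal[of "F - A" B f] by auto
  qed
  finally show "sum f F \<le> infsum f A + infsum f B" .
qed

lemma infsum_card_le:
  assumes "finite A" "\<And>x. x \<in> A \<Longrightarrow> (f::'b \<Rightarrow> ennreal) x \<le> c"
  shows "infsum f A \<le> of_nat (card A) * c"
  using assms by (simp add: sum_bounded_above)

lemma Winf_ltD:
  "W_inf d A \<alpha> \<beta> < c \<Longrightarrow> \<exists>K \<phi> z w. is_matching A \<alpha> \<beta> K \<phi> z w \<and> cost_inf d \<alpha> \<beta> K \<phi> z w < c"
  unfolding W_inf_def by (auto simp: INF_less_iff)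

lemma Winf_le:
  "is_matching A \<alpha> \<beta> K \<phi> z w \<Longrightarrow> W_inf d A \<alpha> \<beta> \<le> cost_inf d \<alpha> \<beta> K \<phi> z w"
  unfolding W_inf_def by (rule INF_lower2[where i="(K,\<phi>,z,w)"]) auto

lemma Wp_ltD:
  "W_p d A p \<alpha> \<beta> < c \<Longrightarrow> \<exists>K \<phi> z w. is_matching A \<alpha> \<beta> K \<phi> z w \<and> cost_p d p \<alpha> \<beta> K \<phi> z w < c"
  unfolding W_p_def by (auto simp: INF_less_iff)

lemma Wp_le:
  "is_matching A \<alpha> \<beta> K \<phi> z w \<Longrightarrow> W_p d A p \<alpha> \<beta> \<le> cost_p d p \<alpha> \<beta> K \<phi> z w"
  unfolding W_p_def by (rule INF_lower2[where i="(K,\<phi>,z,w)"]) auto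

definition psum where
  "psum d p \<alpha> \<beta> K \<phi> z w =
     (\<Sum>\<^sub>\<infinity>k\<in>K. enn_powr (d (snd \<alpha> k) (snd \<beta> (\<phi> k))) p)
      + (\<Sum>\<^sub>\<infinity>i\<in>fst \<alpha> - K. enn_powr (d (snd \<alpha> i) (z i)) p)
      + (\<Sum>\<^sub>\<infinity>j\<in>fst \<beta> - \<phi> ` K. enn_powr (d (w j) (snd \<beta> j)) p)"

lemma cost_p_psum: "cost_p d p \<alpha> \<beta> K \<phi> z w = enn_powr (psum d p \<alpha> \<beta> K \<phi> z w) (1/p)"
  by (simp add: cost_p_def psum_def)

definition close where
  "close d A e t s \<longleftrightarrow> (\<exists>K \<phi> z w. is_matching A t s K \<phi> z w
     \<and> (\<forall>k\<in>K. d (snd t k) (snd s (\<phi> k)) < e) \<and> (\<forall>j\<in>fst s - \<phi> ` K. d (w j) (snd s j) < e))"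

lemma Winf_close: "W_inf d A t s < e \<Longrightarrow> close d A e t s"
proof -
  assume "W_inf d A t s < e"
  then obtain K \<phi> z w where m: "is_matching A t s K \<phi> z w" and c: "cost_inf d t s K \<phi> z w < e"
    using Winf_ltD by blast
  have "\<forall>k\<in>K. d (snd t k) (snd s (\<phi> k)) < e"
  proof
    fix k assume "k \<in> K"
    hence "d (snd t k) (snd s (\<phi> k)) \<le> cost_inf d t s K \<phi> z w"
      unfolding cost_inf_def by (meson SUP_upper sup.coboundedI1)
    thus "d (snd t k) (snd s (\<phi> k)) < e" using c by simp
  qed
  moreover have "\<forall>j\<in>fst s - \<phi> ` K. d (w j) (snd s j) < e"
  proof
    fix j assume "j \<in> fst s - \<phi> ` K"
    hence "d (w j) (snd s j) \<le> cost_inf d t s K \<phi> z w"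
      unfolding cost_inf_def by (meson SUP_upper sup.coboundedI2)
    thus "d (w j) (snd s j) < e" using c by simp
  qed
  ultimately show ?thesis using m unfolding close_def by blast
qed

lemma Wp_close:
  assumes "p > 0" "e > 0" "W_p d A p t s < ennreal e"
  shows "close d A (ennreal e) t s"
proof -
  obtain K \<phi> z w where m: "is_matching A t s K \<phi> z w" and c: "cost_p d p t s K \<phi> z w < ennreal e"
    using Wp_ltD[OF assms(3)] by blast
  have ps: "psum d p t s K \<phi> z w < ennreal (e powr p)"
    using c cost_lt_iff[OF assms(1,2)] by (simp add: cost_p_psum)
  have "\<forall>k\<in>K. d (snd t k) (snd s (\<phi> k)) < ennreal e"
  proof
    fix k assume "k \<in> K"
    hence "enn_powr (d (snd t k) (snd s (\<phi> k))) p \<le> (\<Sum>\<^sub>\<infinity>k\<in>K. enn_powr (d (snd t k) (snd s (\<phi> k))) p)"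
      using term_le_infsum[of k K "\<lambda>k. enn_powr (d (snd t k) (snd s (\<phi> k))) p"] by simp
    hence "enn_powr (d (snd t k) (snd s (\<phi> k))) p \<le> psum d p t s K \<phi> z w"
      unfolding psum_def by (intro add_increasing2) auto
    thus "d (snd t k) (snd s (\<phi> k)) < ennreal e" using ps pow_lt_iff[OF assms(1,2)] by (meson order_le_less_trans)
  qed
  moreover have "\<forall>j\<in>fst s - \<phi> ` K. d (w j) (snd s j) < ennreal e"
  proof
    fix j assume "j \<in> fst s - \<phi> ` K"
    hence "enn_powr (d (w j) (snd s j)) p \<le> (\<Sum>\<^sub>\<infinity>j\<in>fst s - \<phi> ` K. enn_powr (d (w j) (snd s j)) p)"
      using term_le_infsum[of j "fst s - \<phi> ` K" "\<lambda>j. enn_powr (d (w j) (snd s j)) p"] by simp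
    hence "enn_powr (d (w j) (snd s j)) p \<le> psum d p t s K \<phi> z w"
      unfolding psum_def by (intro add_increasing) auto
    thus "d (w j) (snd s j) < ennreal e" using ps pow_lt_iff[OF assms(1,2)] by (meson order_le_less_trans)
  qed
  ultimately show ?thesis using m unfolding close_def by blast
qed




lemma upper_mem: "j \<in> fst (upper d A \<delta> s) \<longleftrightarrow> j \<in> fst s \<and> \<not> setdist d (snd s j) A < \<delta>"
  by (simp add: upper_def nbhd_def)

lemma lower_mem: "j \<in> fst (lower d A \<delta> s) \<longleftrightarrow> j \<in> fst s \<and> setdist d (snd s j) A < \<delta> \<and> snd s j \<notin> A"
  by (simp add: lower_def nbhd_def)

lemma snd_upper[simp]: "snd (upper d A \<delta> s) = snd s" by (simp add: upper_def)
lemma snd_lower[simp]: "snd (lower d A \<delta> s) = snd s" by (simp add: lower_def)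

lemma K1:
  assumes em: "ext_metric d" and m: "is_matching A t s K \<phi> z w"
    and cw: "\<forall>j\<in>fst s - \<phi> ` K. d (w j) (snd s j) < ennreal e"
    and ck: "\<forall>k\<in>K. d (snd t k) (snd s (\<phi> k)) < ennreal e"
    and e: "e > 0" "e' \<ge> 0" "e + e' \<le> \<epsilon>"
    and j: "j \<in> fst (upper d A (ennreal \<epsilon>) s)"
  shows "\<exists>k\<in>K. j = \<phi> k \<and> k \<in> fst (upper d A (ennreal e') t)"
proof -
  have js: "j \<in> fst s" and jd: "ennreal \<epsilon> \<le> setdist d (snd s j) A" using j by (auto simp: upper_mem)
  have "j \<in> \<phi> ` K"
  proof (rule ccontr)
    assume "j \<notin> \<phi> ` K"
    hence "w j \<in> A" "d (w j) (snd s j) < ennreal e" using m cw js by (auto simp: is_matching_def)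
    hence "setdist d (snd s j) A < ennreal e" using setdist_le[of "w j" A d "snd s j"] em_sym[OF em]
      by (metis order_le_less_trans)
    moreover have "ennreal e \<le> ennreal \<epsilon>" using e by simp
    ultimately show False using jd by simp
  qed
  then obtain k where k: "k \<in> K" "j = \<phi> k" by blast
  have "k \<in> fst t" using m k by (auto simp: is_matching_def)
  moreover have "\<not> setdist d (snd t k) A < ennreal e'"
  proof
    assume a: "setdist d (snd t k) A < ennreal e'"
    have "setdist d (snd s j) A \<le> d (snd s j) (snd t k) + setdist d (snd t k) A"
      by (rule setdist_tri[OF em])
    also have "\<dots> < ennreal (e + e')"
      using ck k a em_sym[OF em] by (intro ennreal_add_lt) auto
    also have "\<dots> \<le> ennreal \<epsilon>" using e by (intro ennreal_leI) auto
    finally show False using jd by simp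
  qed
  ultimately show ?thesis using k by (auto simp: upper_mem)
qed

lemma TBext:
  assumes em: "ext_metric d"
    and h: "\<And>\<eta>::real. \<eta> > 0 \<Longrightarrow> \<exists>C. finite C \<and> (\<forall>q\<in>T. \<exists>c\<in>C. d c q < ennreal \<eta>)"
  shows "totally_bounded_wrt d T"
  unfolding totally_bounded_wrt_def
proof (intro allI impI)
  fix \<epsilon> :: real assume "\<epsilon> > 0"
  then obtain C where C: "finite C" "\<forall>q\<in>T. \<exists>c\<in>C. d c q < ennreal (\<epsilon>/2)" using h[of "\<epsilon>/2"] by auto
  define C' where "C' = {c\<in>C. \<exists>q\<in>T. d c q < ennreal (\<epsilon>/2)}"
  define pc where "pc c = (SOME q. q \<in> T \<and> d c q < ennreal (\<epsilon>/2))" for c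
  have pc: "pc c \<in> T \<and> d c (pc c) < ennreal (\<epsilon>/2)" if "c \<in> C'" for c
    using that unfolding C'_def pc_def by (metis (mono_tags, lifting) mem_Collect_eq someI_ex)
  show "\<exists>F. finite F \<and> F \<subseteq> T \<and> T \<subseteq> (\<Union>t\<in>F. {s. d t s < ennreal \<epsilon>})"
  proof (intro exI conjI)
    show "finite (pc ` C')" using C unfolding C'_def by auto
    show "pc ` C' \<subseteq> T" using pc by auto
    show "T \<subseteq> (\<Union>t\<in>pc ` C'. {s. d t s < ennreal \<epsilon>})"
    proof
      fix q assume q: "q \<in> T"
      then obtain c where c: "c \<in> C" "d c q < ennreal (\<epsilon>/2)" using C by auto
      hence cC: "c \<in> C'" using q unfolding C'_def by auto
      have "d (pc c) q \<le> d (pc c) c + d c q" by (rule em_tri[OF em])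
      also have "\<dots> < ennreal (\<epsilon>/2 + \<epsilon>/2)"
        using pc[OF cC] c em_sym[OF em] by (intro ennreal_add_lt) auto
      finally show "q \<in> (\<Union>t\<in>pc ` C'. {s. d t s < ennreal \<epsilon>})" using cC by auto
    qed
  qed
qed

lemma G1:
  assumes em: "ext_metric d"
   and cov: "\<And>\<epsilon>::real. \<epsilon>>0 \<Longrightarrow> \<exists>F. finite F \<and> F \<subseteq> S \<and> (\<forall>s\<in>S. \<exists>t\<in>F. close d A (ennreal \<epsilon>) t s)"
   and fin: "\<And>t \<delta>::real. t\<in>S \<Longrightarrow> \<delta>>0 \<Longrightarrow> finite (fst (upper d A (ennreal \<delta>) t))"
  shows "unif_upper_finite d A S \<and> upper_tot_bounded d A S"
proof
  show "unif_upper_finite d A S"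
    unfolding unif_upper_finite_def
  proof (intro allI impI)
    fix \<epsilon> :: real assume ep: "\<epsilon> > 0"
    obtain F where F: "finite F" "F \<subseteq> S" "\<forall>s\<in>S. \<exists>t\<in>F. close d A (ennreal (\<epsilon>/2)) t s"
      using cov[of "\<epsilon>/2"] ep by auto
    define M where "M = (\<Sum>t\<in>F. card (fst (upper d A (ennreal (\<epsilon>/2)) t)))"
    show "\<exists>M. \<forall>\<alpha>\<in>S. finite (fst (upper d A (ennreal \<epsilon>) \<alpha>)) \<and> card (fst (upper d A (ennreal \<epsilon>) \<alpha>)) \<le> M"
    proof (intro exI ballI)
      fix s assume s: "s \<in> S"
      then obtain t where t: "t \<in> F" "close d A (ennreal (\<epsilon>/2)) t s" using F by auto
      then obtain K \<phi> z w where m: "is_matching A t s K \<phi> z w"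
        and ck: "\<forall>k\<in>K. d (snd t k) (snd s (\<phi> k)) < ennreal (\<epsilon>/2)"
        and cw: "\<forall>j\<in>fst s - \<phi> ` K. d (w j) (snd s j) < ennreal (\<epsilon>/2)"
        unfolding close_def by blast
      let ?U = "fst (upper d A (ennreal (\<epsilon>/2)) t)"
      have sub: "fst (upper d A (ennreal \<epsilon>) s) \<subseteq> \<phi> ` (K \<inter> ?U)"
      proof
        fix j assume "j \<in> fst (upper d A (ennreal \<epsilon>) s)"
        from K1[OF em m cw ck _ _ _ this, of "\<epsilon>/2"] ep show "j \<in> \<phi> ` (K \<inter> ?U)" by auto
      qed
      have finU: "finite ?U" using fin[of t "\<epsilon>/2"] t F ep by auto
      show "finite (fst (upper d A (ennreal \<epsilon>) s)) \<and> card (fst (upper d A (ennreal \<epsilon>) s)) \<le> M"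
      proof
        show "finite (fst (upper d A (ennreal \<epsilon>) s))" using sub finU finite_subset by blast
        have "card (fst (upper d A (ennreal \<epsilon>) s)) \<le> card (\<phi> ` (K \<inter> ?U))"
          using sub finU by (intro card_mono) auto
        also have "\<dots> \<le> card ?U" using finU by (meson card_image_le card_mono inf_le2 order_trans finite_Int)
        also have "\<dots> \<le> M" unfolding M_def using F t finU
          by (intro member_le_sum) auto
        finally show "card (fst (upper d A (ennreal \<epsilon>) s)) \<le> M" .
      qed
    qed
  qed
  show "upper_tot_bounded d A S"
    unfolding upper_tot_bounded_def
  proof (intro allI impI TBext[OF em])
    fix \<epsilon> \<eta> :: real assume ep: "\<epsilon> > 0" and et: "\<eta> > 0"
    define e where "e = min (\<epsilon>/2) \<eta>"
    have e: "e > 0" "e + e \<le> \<epsilon>" "e \<le> \<eta>" using ep et by (auto simp: e_def)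
    obtain F where F: "finite F" "F \<subseteq> S" "\<forall>s\<in>S. \<exists>t\<in>F. close d A (ennreal e) t s"
      using cov[of e] e by auto
    define C where "C = (\<Union>t\<in>F. supp (upper d A (ennreal e) t))"
    show "\<exists>C. finite C \<and> (\<forall>q\<in>\<Union>\<alpha>\<in>S. supp (upper d A (ennreal \<epsilon>) \<alpha>). \<exists>c\<in>C. d c q < ennreal \<eta>)"
    proof (intro exI conjI ballI)
      show "finite C" unfolding C_def supp_def using F fin e(1) by auto
      fix q assume "q \<in> (\<Union>\<alpha>\<in>S. supp (upper d A (ennreal \<epsilon>) \<alpha>))"
      then obtain s j where s: "s \<in> S" "j \<in> fst (upper d A (ennreal \<epsilon>) s)" "q = snd s j"
        by (auto simp: supp_def)
      then obtain t where t: "t \<in> F" "close d A (ennreal e) t s" using F by auto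
      then obtain K \<phi> z w where m: "is_matching A t s K \<phi> z w"
        and ck: "\<forall>k\<in>K. d (snd t k) (snd s (\<phi> k)) < ennreal e"
        and cw: "\<forall>j\<in>fst s - \<phi> ` K. d (w j) (snd s j) < ennreal e"
        unfolding close_def by blast
      obtain k where k: "k \<in> K" "j = \<phi> k" "k \<in> fst (upper d A (ennreal e) t)"
        using K1[OF em m cw ck e(1) _ e(2) s(2)] e by auto
      show "\<exists>c\<in>C. d c q < ennreal \<eta>"
      proof
        show "snd t k \<in> C" unfolding C_def supp_def using t k by auto
        have "d (snd t k) q < ennreal e" using ck k s by auto
        also have "\<dots> \<le> ennreal \<eta>" using e by simp
        finally show "d (snd t k) q < ennreal \<eta>" .
      qed
    qed
  qed
qed




lemma setdist_pos: "metric_pair d A \<Longrightarrow> x \<notin> A \<Longrightarrow> setdist d x A > 0"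
  unfolding metric_pair_def d_closed_def using not_gr_zero by blast

lemma diag_notin: "\<alpha> \<in> diagrams A \<Longrightarrow> i \<in> fst \<alpha> \<Longrightarrow> snd \<alpha> i \<notin> A"
  unfolding diagrams_def by auto

lemma matching_zero:
  assumes "is_matching A \<alpha> zero_diag K \<phi> z w"
  shows "K = {}" "\<forall>i\<in>fst \<alpha>. z i \<in> A"
  using assms by (auto simp: is_matching_def zero_diag_def)

lemma psum_zero:
  "psum d p \<alpha> zero_diag {} \<phi> z w = (\<Sum>\<^sub>\<infinity>i\<in>fst \<alpha>. enn_powr (d (snd \<alpha> i) (z i)) p)"
  by (simp add: psum_def zero_diag_def)

lemma Wp_zero_ltD:
  assumes "W_p d A p \<alpha> zero_diag < c"
  shows "\<exists>z. (\<forall>i\<in>fst \<alpha>. z i \<in> A) \<and> enn_powr (\<Sum>\<^sub>\<infinity>i\<in>fst \<alpha>. enn_powr (d (snd \<alpha> i) (z i)) p) (1/p) < c"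
proof -
  obtain K \<phi> z w where m: "is_matching A \<alpha> zero_diag K \<phi> z w" and c: "cost_p d p \<alpha> zero_diag K \<phi> z w < c"
    using Wp_ltD[OF assms] by blast
  have K: "K = {}" using matching_zero[OF m] by simp
  have "cost_p d p \<alpha> zero_diag K \<phi> z w = enn_powr (\<Sum>\<^sub>\<infinity>i\<in>fst \<alpha>. enn_powr (d (snd \<alpha> i) (z i)) p) (1/p)"
    unfolding cost_p_psum K psum_zero ..
  thus ?thesis using matching_zero(2)[OF m] c by (intro exI[of _ z]) simp
qed

lemma Wp_zero_le:
  assumes "\<forall>i\<in>fst \<alpha>. z i \<in> A"
  shows "W_p d A p \<alpha> zero_diag \<le> enn_powr (\<Sum>\<^sub>\<infinity>i\<in>fst \<alpha>. enn_powr (d (snd \<alpha> i) (z i)) p) (1/p)"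
proof -
  have "is_matching A \<alpha> zero_diag {} (\<lambda>x. x) z z" using assms by (auto simp: is_matching_def zero_diag_def)
  from Wp_le[OF this, of d p] show ?thesis unfolding cost_p_psum psum_zero .
qed

lemma Dp_base:
  assumes "t \<in> D_p d A p"
  shows "\<exists>\<zeta>. (\<forall>i\<in>fst (lower d A top t). \<zeta> i \<in> A) \<and>
      (\<Sum>\<^sub>\<infinity>i\<in>fst (lower d A top t). enn_powr (d (snd t i) (\<zeta> i)) p) < top"
proof -
  have "W_p d A p (lower d A top t) zero_diag < top" using assms by (simp add: D_p_def)
  from Wp_zero_ltD[OF this] obtain z where z: "\<forall>i\<in>fst (lower d A top t). z i \<in> A"
    "enn_powr (\<Sum>\<^sub>\<infinity>i\<in>fst (lower d A top t). enn_powr (d (snd t i) (z i)) p) (1/p) < top" by auto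
  thus ?thesis by (intro exI[of _ z]) (auto simp: less_top[symmetric] ep_top_iff)
qed

lemma Dp_fin:
  assumes mp: "metric_pair d A" and p: "p > 0" and t: "t \<in> D_p d A p" and de: "\<delta> > 0"
  shows "finite (fst (upper d A (ennreal \<delta>) t))"
proof -
  obtain \<zeta> where z: "\<forall>i\<in>fst (lower d A top t). \<zeta> i \<in> A"
     "(\<Sum>\<^sub>\<infinity>i\<in>fst (lower d A top t). enn_powr (d (snd t i) (\<zeta> i)) p) < top"
    using Dp_base[OF t] by blast
  have td: "t \<in> diagrams A" using t by (simp add: D_p_def)
  define B where "B = {i\<in>fst (lower d A top t). ennreal \<delta> \<le> setdist d (snd t i) A}"
  have sub: "fst (upper d A (ennreal \<delta>) t) \<subseteq> fst (upper d A top t) \<union> B"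
  proof
    fix i assume "i \<in> fst (upper d A (ennreal \<delta>) t)"
    hence i: "i \<in> fst t" "\<not> setdist d (snd t i) A < ennreal \<delta>" unfolding upper_mem by auto
    show "i \<in> fst (upper d A top t) \<union> B"
    proof (cases "setdist d (snd t i) A < top")
      case True
      hence "i \<in> fst (lower d A top t)" unfolding lower_mem using i diag_notin[OF td] by blast
      hence "i \<in> B" unfolding B_def using i(2) by (simp add: not_less)
      thus ?thesis by blast
    next
      case False
      hence "i \<in> fst (upper d A top t)" unfolding upper_mem using i by blast
      thus ?thesis by blast
    qed
  qed
  have "finite B"
  proof (rule ccontr)
    assume inf: "infinite B"
    have "(\<Sum>\<^sub>\<infinity>i\<in>B. enn_powr (d (snd t i) (\<zeta> i)) p) = \<infinity>"
    proof (rule infsum_superconst_infinite_ennreal[OF _ _ inf])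
      show "0 < ennreal (\<delta> powr p)" using de by simp
      fix i assume i: "i \<in> B"
      hence i1: "i \<in> fst (lower d A top t)" "ennreal \<delta> \<le> setdist d (snd t i) A" unfolding B_def by auto
      have "setdist d (snd t i) A \<le> d (snd t i) (\<zeta> i)" using z(1) i1(1) by (intro setdist_le) auto
      hence "ennreal \<delta> \<le> d (snd t i) (\<zeta> i)" using i1(2) by (rule order_trans[rotated])
      thus "ennreal (\<delta> powr p) \<le> enn_powr (d (snd t i) (\<zeta> i)) p" using p de by (intro pow_ge) auto
    qed
    moreover have "(\<Sum>\<^sub>\<infinity>i\<in>B. enn_powr (d (snd t i) (\<zeta> i)) p) \<le>
        (\<Sum>\<^sub>\<infinity>i\<in>fst (lower d A top t). enn_powr (d (snd t i) (\<zeta> i)) p)"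
      by (rule infsum_subset_ennreal) (auto simp: B_def)
    ultimately show False using z(2) by (simp add: top_unique)
  qed
  moreover have "finite (fst (upper d A top t))" using t by (simp add: D_p_def)
  ultimately show ?thesis using sub finite_subset by blast
qed

lemma pos_below: "(x::ennreal) > 0 \<Longrightarrow> \<exists>r>0. ennreal r \<le> x"
proof -
  assume "x > 0"
  then obtain y where y: "0 < y" "y < x" using dense by blast
  then obtain r where "y = ennreal r" "r \<ge> 0" by (cases y) auto
  thus ?thesis using y by (intro exI[of _ r]) auto
qed

lemma finite_delta:
  assumes "finite G" "\<forall>i\<in>G. f i > (0::ennreal)"
  shows "\<exists>\<delta>>0. \<forall>i\<in>G. ennreal \<delta> \<le> f i"
  using assms
proof (induction G rule: finite_induct)
  case empty thus ?case by (intro exI[of _ 1]) auto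
next
  case (insert a G)
  then obtain \<delta> where \<delta>: "\<delta> > 0" "\<forall>i\<in>G. ennreal \<delta> \<le> f i" by auto
  have "f a > 0" using insert.prems by simp
  then obtain r where r: "r > 0" "ennreal r \<le> f a" using pos_below by blast
  show ?case
  proof (intro exI[of _ "min \<delta> r"] conjI ballI)
    show "min \<delta> r > 0" using \<delta> r by simp
    fix i assume "i \<in> insert a G"
    thus "ennreal (min \<delta> r) \<le> f i" using \<delta> r
      by (auto intro: order_trans[rotated] ennreal_leI)
  qed
qed

lemma Dp_tail:
  assumes mp: "metric_pair d A" and t: "t \<in> D_p d A p" and tau: "\<tau> > 0"
  shows "\<exists>\<delta>'>0. \<exists>\<zeta>. (\<forall>i\<in>fst (lower d A (ennreal \<delta>') t). \<zeta> i \<in> A) \<and>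
      (\<Sum>\<^sub>\<infinity>i\<in>fst (lower d A (ennreal \<delta>') t). enn_powr (d (snd t i) (\<zeta> i)) p) < \<tau>"
proof -
  define L where "L = fst (lower d A top t)"
  obtain \<zeta> where z: "\<forall>i\<in>L. \<zeta> i \<in> A" "(\<Sum>\<^sub>\<infinity>i\<in>L. enn_powr (d (snd t i) (\<zeta> i)) p) < top"
    using Dp_base[OF t] unfolding L_def by blast
  define g where "g = (\<lambda>i. enn_powr (d (snd t i) (\<zeta> i)) p)"
  define Sg where "Sg = infsum g L"
  have Sg: "Sg < top" using z(2) by (simp add: Sg_def g_def)
  have "\<exists>G. finite G \<and> G \<subseteq> L \<and> Sg < sum g G + \<tau>"
  proof (rule ccontr)
    assume "\<not> ?thesis"
    hence h: "\<forall>G\<in>{G. finite G \<and> G \<subseteq> L}. sum g G + \<tau> \<le> Sg" by (auto simp: not_less)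
    have "Sg + \<tau> = (SUP G\<in>{G. finite G \<and> G \<subseteq> L}. sum g G) + \<tau>"
      unfolding Sg_def by (subst nonneg_infsum_complete) auto
    also have "\<dots> = (SUP G\<in>{G. finite G \<and> G \<subseteq> L}. sum g G + \<tau>)"
      by (rule ennreal_SUP_add_left[symmetric]) auto
    also have "\<dots> \<le> Sg" using h by (intro SUP_least) auto
    finally have "Sg + \<tau> \<le> Sg + 0" by simp
    thus False using Sg tau by (auto simp: ennreal_add_left_cancel_le)
  qed
  then obtain G where G: "finite G" "G \<subseteq> L" "Sg < sum g G + \<tau>" by blast
  have "sum g G + infsum g (L - G) = Sg"
  proof -
    have "infsum g (G \<union> (L - G)) = infsum g G + infsum g (L - G)"
      by (rule infsum_Un_disjoint) auto
    moreover have "G \<union> (L - G) = L" using G by auto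
    ultimately show ?thesis using G by (simp add: Sg_def)
  qed
  hence lt: "sum g G + infsum g (L - G) < sum g G + \<tau>" using G(3) by simp
  have "sum g G \<le> Sg" using \<open>sum g G + infsum g (L - G) = Sg\<close> by (metis le_iff_add)
  hence "sum g G \<noteq> top" using Sg by (metis top.not_eq_extremum order_le_less_trans)
  hence tail: "infsum g (L - G) < \<tau>" using lt by (simp add: ennreal_add_left_cancel_less)
  have td: "t \<in> diagrams A" using t by (simp add: D_p_def)
  have "\<forall>i\<in>G. setdist d (snd t i) A > 0"
    using G(2) diag_notin[OF td] setdist_pos[OF mp] by (auto simp: L_def lower_mem)
  then obtain \<delta> where \<delta>: "\<delta> > 0" "\<forall>i\<in>G. ennreal \<delta> \<le> setdist d (snd t i) A"
    using finite_delta[OF G(1), of "\<lambda>i. setdist d (snd t i) A"] by blast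
  have sub: "fst (lower d A (ennreal \<delta>) t) \<subseteq> L - G"
  proof
    fix i assume i: "i \<in> fst (lower d A (ennreal \<delta>) t)"
    hence i2: "i \<in> fst t" "setdist d (snd t i) A < ennreal \<delta>" "snd t i \<notin> A" by (auto simp: lower_mem)
    hence "i \<in> L" unfolding L_def lower_mem using ennreal_less_top order.strict_trans by blast
    moreover have "i \<notin> G" using \<delta>(2) i2(2) leD by blast
    ultimately show "i \<in> L - G" by blast
  qed
  show ?thesis
  proof (intro exI conjI)
    show "\<delta> > 0" by fact
    show "\<forall>i\<in>fst (lower d A (ennreal \<delta>) t). \<zeta> i \<in> A" using sub z by auto
    have "infsum g (fst (lower d A (ennreal \<delta>) t)) \<le> infsum g (L - G)"
      by (rule infsum_subset_ennreal[OF sub])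
    thus "(\<Sum>\<^sub>\<infinity>i\<in>fst (lower d A (ennreal \<delta>) t). enn_powr (d (snd t i) (\<zeta> i)) p) < \<tau>"
      using tail unfolding g_def by simp
  qed
qed

lemma partA:
  assumes mp: "metric_pair d A" and S: "S \<subseteq> D_inf d A" and tb: "totally_bounded_wrt (W_inf d A) S"
  shows "unif_upper_finite d A S \<and> upper_tot_bounded d A S"
proof (rule G1)
  show "ext_metric d" using mp by (simp add: metric_pair_def)
  fix \<epsilon> :: real assume ep: "\<epsilon> > 0"
  obtain F where F: "finite F" "F \<subseteq> S" "S \<subseteq> (\<Union>t\<in>F. {s. W_inf d A t s < ennreal \<epsilon>})"
    using tb[unfolded totally_bounded_wrt_def, rule_format, OF ep] by (elim exE conjE)
  show "\<exists>F. finite F \<and> F \<subseteq> S \<and> (\<forall>s\<in>S. \<exists>t\<in>F. close d A (ennreal \<epsilon>) t s)"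
  proof (intro exI[of _ F] conjI ballI)
    fix s assume "s \<in> S"
    hence "s \<in> (\<Union>t\<in>F. {s. W_inf d A t s < ennreal \<epsilon>})" using F(3) by (rule subsetD[rotated])
    then obtain t where t: "t \<in> F" "W_inf d A t s < ennreal \<epsilon>" by (elim UN_E) simp
    show "\<exists>t\<in>F. close d A (ennreal \<epsilon>) t s" using t(1) Winf_close[OF t(2)] by (intro bexI)
  qed (use F in auto)
next
  fix t and \<delta> :: real assume "t \<in> S" "\<delta> > 0"
  hence "t \<in> D_inf d A" "ennreal \<delta> > 0" using S by auto
  thus "finite (fst (upper d A (ennreal \<delta>) t))" unfolding D_inf_def by blast
qed

lemma partC1:
  assumes mp: "metric_pair d A" and p: "p > 0" and S: "S \<subseteq> D_p d A p" and tb: "totally_bounded_wrt (W_p d A p) S"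
  shows "unif_upper_finite d A S \<and> upper_tot_bounded d A S"
proof (rule G1)
  show "ext_metric d" using mp by (simp add: metric_pair_def)
  fix \<epsilon> :: real assume ep: "\<epsilon> > 0"
  obtain F where F: "finite F" "F \<subseteq> S" "S \<subseteq> (\<Union>t\<in>F. {s. W_p d A p t s < ennreal \<epsilon>})"
    using tb[unfolded totally_bounded_wrt_def, rule_format, OF ep] by (elim exE conjE)
  show "\<exists>F. finite F \<and> F \<subseteq> S \<and> (\<forall>s\<in>S. \<exists>t\<in>F. close d A (ennreal \<epsilon>) t s)"
  proof (intro exI[of _ F] conjI ballI)
    fix s assume "s \<in> S"
    hence "s \<in> (\<Union>t\<in>F. {s. W_p d A p t s < ennreal \<epsilon>})" using F(3) by (rule subsetD[rotated])
    then obtain t where t: "t \<in> F" "W_p d A p t s < ennreal \<epsilon>" by (elim UN_E) simp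
    show "\<exists>t\<in>F. close d A (ennreal \<epsilon>) t s" using t(1) Wp_close[OF p ep t(2)] by (intro bexI)
  qed (use F in auto)
next
  fix t and \<delta> :: real assume "t \<in> S" "\<delta> > 0"
  thus "finite (fst (upper d A (ennreal \<delta>) t))" using S Dp_fin[OF mp p, of t \<delta>] by blast
qed




lemma G2:
  fixes U :: "'a diag \<Rightarrow> nat set"
  assumes em: "ext_metric d"
   and fin: "\<forall>s\<in>S. finite (U s) \<and> card (U s) \<le> M"
   and tb: "totally_bounded_wrt d (\<Union>s\<in>S. snd s ` U s)"
   and eta: "\<eta> > 0"
  shows "\<exists>F. finite F \<and> F \<subseteq> S \<and> (\<forall>s\<in>S. \<exists>t\<in>F. \<exists>\<psi>. bij_betw \<psi> (U t) (U s) \<and>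
           (\<forall>k\<in>U t. d (snd t k) (snd s (\<psi> k)) < ennreal (\<eta> + \<eta>)))"
proof -
  let ?T = "\<Union>s\<in>S. snd s ` U s"
  obtain C where C: "finite C" "C \<subseteq> ?T" "?T \<subseteq> (\<Union>c\<in>C. {q. d c q < ennreal \<eta>})"
    using tb[unfolded totally_bounded_wrt_def, rule_format, OF eta] by (elim exE conjE)
  define ch :: "'a diag \<Rightarrow> nat \<Rightarrow> 'a" where "ch s j = (SOME c. c \<in> C \<and> d c (snd s j) < ennreal \<eta>)" for s j
  have ch: "ch s j \<in> C \<and> d (ch s j) (snd s j) < ennreal \<eta>" if "s \<in> S" "j \<in> U s" for s j
  proof -
    have "snd s j \<in> ?T" using that by blast
    hence "\<exists>c. c \<in> C \<and> d c (snd s j) < ennreal \<eta>" using C(3) by blast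
    thus ?thesis unfolding ch_def by (rule someI_ex)
  qed
  define cl :: "'a diag \<Rightarrow> 'a \<Rightarrow> nat set" where "cl s c = {j\<in>U s. ch s j = c}" for s c
  define pat where "pat s = (\<lambda>c. if c \<in> C then card (cl s c) else 0)" for s
  define P where "P = {f. \<forall>c. (c \<in> C \<longrightarrow> f c \<in> {0..M}) \<and> (c \<notin> C \<longrightarrow> f c = 0)}"
  have finP: "finite P" unfolding P_def by (rule finite_set_of_finite_funs) (use C in auto)
  have patP: "pat s \<in> P" if "s \<in> S" for s
  proof -
    have "card (cl s c) \<le> M" for c
    proof -
      have "cl s c \<subseteq> U s" by (auto simp: cl_def)
      hence "card (cl s c) \<le> card (U s)" using fin that by (intro card_mono) auto
      moreover have "card (U s) \<le> M" using fin that by blast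
      ultimately show ?thesis by linarith
    qed
    thus ?thesis unfolding P_def pat_def by auto
  qed
  define rep where "rep f = (SOME s. s \<in> S \<and> pat s = f)" for f
  have rep: "rep (pat s) \<in> S \<and> pat (rep (pat s)) = pat s" if "s \<in> S" for s
    unfolding rep_def by (rule someI[of _ s]) (use that in auto)
  define F where "F = rep ` pat ` S"
  show ?thesis
  proof (intro exI conjI ballI)
    have "pat ` S \<subseteq> P" using patP by blast
    hence "finite (pat ` S)" using finP by (rule finite_subset)
    thus "finite F" unfolding F_def by (rule finite_imageI)
    show "F \<subseteq> S" unfolding F_def using rep by auto
    fix s assume s: "s \<in> S"
    define t where "t = rep (pat s)"
    have t: "t \<in> S" "pat t = pat s" using rep[OF s] by (auto simp: t_def)
    have tF: "t \<in> F" unfolding F_def t_def using s by blast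
    have cardeq: "card (cl t c) = card (cl s c)" if "c \<in> C" for c
    proof -
      have "pat t c = pat s c" using t(2) by simp
      thus ?thesis using that by (simp add: pat_def)
    qed
    have fincl: "finite (cl r c)" if "r \<in> S" for r c
      using fin that unfolding cl_def by auto
    have exh: "\<exists>h. bij_betw h (cl t c) (cl s c)" if "c \<in> C" for c
      by (rule finite_same_card_bij) (use fincl t s cardeq that in auto)
    define hc where "hc c = (SOME h. bij_betw h (cl t c) (cl s c))" for c
    have hc: "bij_betw (hc c) (cl t c) (cl s c)" if "c \<in> C" for c
      unfolding hc_def using someI_ex[OF exh[OF that]] .
    define \<psi> where "\<psi> k = hc (ch t k) k" for k
    have psi_cl: "\<psi> k \<in> cl s (ch t k)" if "k \<in> U t" for k
    proof -
      have "ch t k \<in> C" using ch[OF t(1) that] by simp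
      moreover have "k \<in> cl t (ch t k)" using that by (simp add: cl_def)
      ultimately show ?thesis unfolding \<psi>_def using hc bij_betwE by blast
    qed
    show "\<exists>t\<in>F. \<exists>\<psi>. bij_betw \<psi> (U t) (U s) \<and> (\<forall>k\<in>U t. d (snd t k) (snd s (\<psi> k)) < ennreal (\<eta> + \<eta>))"
    proof (intro bexI[OF _ tF] exI[of _ \<psi>] conjI ballI)
      show "bij_betw \<psi> (U t) (U s)"
        unfolding bij_betw_def
      proof (intro conjI)
        show "inj_on \<psi> (U t)"
        proof (rule inj_onI)
          fix k1 k2 assume k: "k1 \<in> U t" "k2 \<in> U t" "\<psi> k1 = \<psi> k2"
          have "ch t k1 = ch t k2" using psi_cl[OF k(1)] psi_cl[OF k(2)] k(3) by (simp add: cl_def)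
          moreover have "k1 \<in> cl t (ch t k1)" "k2 \<in> cl t (ch t k1)" using k(1,2) calculation by (auto simp: cl_def)
          moreover have "ch t k1 \<in> C" using ch[OF t(1) k(1)] by simp
          ultimately show "k1 = k2" using hc[of "ch t k1"] k(3) unfolding \<psi>_def bij_betw_def inj_on_def by metis
        qed
        show "\<psi> ` U t = U s"
        proof
          show "\<psi> ` U t \<subseteq> U s" using psi_cl by (auto simp: cl_def)
          show "U s \<subseteq> \<psi> ` U t"
          proof
            fix j assume j: "j \<in> U s"
            define c where "c = ch s j"
            have c: "c \<in> C" using ch[OF s j] by (simp add: c_def)
            have "j \<in> cl s c" using j by (simp add: cl_def c_def)
            then obtain k where k: "k \<in> cl t c" "hc c k = j" using hc[OF c] by (metis bij_betw_def imageE)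
            hence "k \<in> U t" "ch t k = c" by (auto simp: cl_def)
            thus "j \<in> \<psi> ` U t" using k unfolding \<psi>_def by force
          qed
        qed
      qed
      fix k assume k: "k \<in> U t"
      have pk: "\<psi> k \<in> U s" "ch s (\<psi> k) = ch t k" using psi_cl[OF k] by (auto simp: cl_def)
      have "d (snd t k) (snd s (\<psi> k)) \<le> d (snd t k) (ch t k) + d (ch t k) (snd s (\<psi> k))"
        by (rule em_tri[OF em])
      also have "\<dots> < ennreal (\<eta> + \<eta>)"
        using ch[OF t(1) k] ch[OF s pk(1)] pk(2) em_sym[OF em] by (intro ennreal_add_lt) auto
      finally show "d (snd t k) (snd s (\<psi> k)) < ennreal (\<eta> + \<eta>)" .
    qed
  qed
qed

lemma upper_sub: "fst (upper d A \<delta> s) \<subseteq> fst s" by (auto simp: upper_mem)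

lemma supp_upper: "supp (upper d A \<delta> s) = snd s ` fst (upper d A \<delta> s)"
  by (simp add: supp_def)

lemma diff_upper: "s \<in> diagrams A \<Longrightarrow> fst s - fst (upper d A \<delta> s) = fst (lower d A \<delta> s)"
  using diag_notin[of s A] by (auto simp: upper_mem lower_mem)

lemma match_build:
  assumes "bij_betw \<psi> (fst (upper d A \<delta> t)) (fst (upper d A \<delta> s))"
    and "\<forall>i\<in>fst t - fst (upper d A \<delta> t). z i \<in> A"
    and "\<forall>j\<in>fst s - fst (upper d A \<delta> s). w j \<in> A"
  shows "is_matching A t s (fst (upper d A \<delta> t)) \<psi> z w"
  using assms upper_sub unfolding is_matching_def bij_betw_def by blast

lemma partB:
  assumes mp: "metric_pair d A" and S: "S \<subseteq> D_inf d A"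
    and uuf: "unif_upper_finite d A S" and utb: "upper_tot_bounded d A S"
  shows "totally_bounded_wrt (W_inf d A) S"
  unfolding totally_bounded_wrt_def
proof (intro allI impI)
  fix \<epsilon> :: real assume ep: "\<epsilon> > 0"
  have em: "ext_metric d" using mp by (simp add: metric_pair_def)
  define \<delta> where "\<delta> = \<epsilon> / 4"
  have dp: "\<delta> > 0" using ep by (simp add: \<delta>_def)
  define U :: "'a diag \<Rightarrow> nat set" where "U r = fst (upper d A (ennreal \<delta>) r)" for r
  obtain M where M: "\<forall>s\<in>S. finite (U s) \<and> card (U s) \<le> M"
    using uuf[unfolded unif_upper_finite_def, rule_format, OF dp] unfolding U_def by blast
  have tb: "totally_bounded_wrt d (\<Union>s\<in>S. snd s ` U s)"
    using utb[unfolded upper_tot_bounded_def, rule_format, OF dp] unfolding U_def supp_upper .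
  obtain F where F: "finite F" "F \<subseteq> S" "\<forall>s\<in>S. \<exists>t\<in>F. \<exists>\<psi>. bij_betw \<psi> (U t) (U s) \<and>
           (\<forall>k\<in>U t. d (snd t k) (snd s (\<psi> k)) < ennreal (\<delta> + \<delta>))"
    using G2[OF em M tb dp] by blast
  define zz :: "'a diag \<Rightarrow> nat \<Rightarrow> 'a" where "zz r i = (SOME a. a \<in> A \<and> d (snd r i) a < ennreal \<delta>)" for r i
  have zz: "zz r i \<in> A \<and> d (snd r i) (zz r i) < ennreal \<delta>" if "i \<in> fst r - U r" for r i
  proof -
    have "setdist d (snd r i) A < ennreal \<delta>" using that by (auto simp: U_def upper_mem)
    from setdist_lessD[OF this] obtain a where a: "a \<in> A" "d (snd r i) a < ennreal \<delta>" ..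
    have "a \<in> A \<and> d (snd r i) a < ennreal \<delta>" using a by (rule conjI)
    thus ?thesis unfolding zz_def by (rule someI)
  qed
  show "\<exists>F. finite F \<and> F \<subseteq> S \<and> S \<subseteq> (\<Union>t\<in>F. {s. W_inf d A t s < ennreal \<epsilon>})"
  proof (intro exI[of _ F] conjI subsetI)
    fix s assume s: "s \<in> S"
    then obtain t \<psi> where t: "t \<in> F" "bij_betw \<psi> (U t) (U s)"
      "\<forall>k\<in>U t. d (snd t k) (snd s (\<psi> k)) < ennreal (\<delta> + \<delta>)" using F(3) by blast
    have m: "is_matching A t s (U t) \<psi> (zz t) (zz s)"
      unfolding U_def by (rule match_build) (use t(2) zz in \<open>auto simp: U_def\<close>)
    have psiU: "\<psi> ` U t = U s" using t(2) by (simp add: bij_betw_def)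
    have "cost_inf d t s (U t) \<psi> (zz t) (zz s) \<le> ennreal (\<delta> + \<delta>)"
      unfolding cost_inf_def
    proof (intro sup_least SUP_least)
      fix k assume "k \<in> U t" thus "d (snd t k) (snd s (\<psi> k)) \<le> ennreal (\<delta> + \<delta>)" using t(3) by (simp add: less_imp_le)
    next
      fix i assume "i \<in> fst t - U t"
      hence "d (snd t i) (zz t i) < ennreal \<delta>" using zz by blast
      moreover have "ennreal \<delta> \<le> ennreal (\<delta> + \<delta>)" using dp by (intro ennreal_leI) auto
      ultimately show "d (snd t i) (zz t i) \<le> ennreal (\<delta> + \<delta>)" by (rule order.strict_implies_order[THEN order.trans])
    next
      fix j assume "j \<in> fst s - \<psi> ` U t"
      hence "j \<in> fst s - U s" using psiU by simp
      hence "d (snd s j) (zz s j) < ennreal \<delta>" using zz by blast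
      hence "d (zz s j) (snd s j) < ennreal \<delta>" using em_sym[OF em, of "zz s j" "snd s j"] by simp
      moreover have "ennreal \<delta> \<le> ennreal (\<delta> + \<delta>)" using dp by (intro ennreal_leI) auto
      ultimately show "d (zz s j) (snd s j) \<le> ennreal (\<delta> + \<delta>)" by (rule order.strict_implies_order[THEN order.trans])
    qed
    also have "\<dots> < ennreal \<epsilon>" using ep dp by (subst ennreal_less_iff) (auto simp: \<delta>_def)
    finally have "W_inf d A t s < ennreal \<epsilon>" by (rule le_less_trans[OF Winf_le[OF m]])
    thus "s \<in> (\<Union>t\<in>F. {s. W_inf d A t s < ennreal \<epsilon>})" using t(1) by blast
  qed (use F in auto)
qed


lemma partD:
  assumes mp: "metric_pair d A" and p1: "1 \<le> p" and S: "S \<subseteq> D_p d A p"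
    and uuf: "unif_upper_finite d A S" and utb: "upper_tot_bounded d A S"
    and upv: "unif_p_vanishing d A p S"
  shows "totally_bounded_wrt (W_p d A p) S"
  unfolding totally_bounded_wrt_def
proof (intro allI impI)
  fix \<epsilon> :: real assume ep: "\<epsilon> > 0"
  have p: "p > 0" using p1 by simp
  have em: "ext_metric d" using mp by (simp add: metric_pair_def)
  define q where "q = \<epsilon> powr p"
  have q: "q > 0" using ep by (simp add: q_def)
  define \<epsilon>1 where "\<epsilon>1 = (q/3) powr (1/p)"
  have e1: "\<epsilon>1 > 0" using q by (simp add: \<epsilon>1_def)
  have e1p: "\<epsilon>1 powr p = q/3" using q p by (simp add: \<epsilon>1_def powr_powr)
  obtain \<delta> where dp: "\<delta> > 0" and dv: "\<forall>s\<in>S. W_p d A p (lower d A (ennreal \<delta>) s) zero_diag < ennreal \<epsilon>1"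
    using upv[unfolded unif_p_vanishing_def, rule_format, OF e1] by (elim exE conjE)
  define Q :: "'a diag \<Rightarrow> (nat \<Rightarrow> 'a) \<Rightarrow> bool" where "Q s z \<longleftrightarrow> (\<forall>i\<in>fst (lower d A (ennreal \<delta>) s). z i \<in> A) \<and>
      (\<Sum>\<^sub>\<infinity>i\<in>fst (lower d A (ennreal \<delta>) s). enn_powr (d (snd s i) (z i)) p) < ennreal (q/3)" for s z
  have exQ: "\<exists>z. Q s z" if "s \<in> S" for s
  proof -
    from Wp_zero_ltD[OF dv[rule_format, OF that]] obtain z where z:
      "\<forall>i\<in>fst (lower d A (ennreal \<delta>) s). z i \<in> A"
      "enn_powr (\<Sum>\<^sub>\<infinity>i\<in>fst (lower d A (ennreal \<delta>) s). enn_powr (d (snd s i) (z i)) p) (1/p) < ennreal \<epsilon>1"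
      by auto
    show ?thesis unfolding Q_def using z cost_lt_iff[OF p e1] e1p by (intro exI[of _ z]) simp
  qed
  define zz :: "'a diag \<Rightarrow> nat \<Rightarrow> 'a" where "zz s = (SOME z. Q s z)" for s
  have zz: "Q s (zz s)" if "s \<in> S" for s unfolding zz_def using exQ[OF that] by (rule someI_ex)
  define U :: "'a diag \<Rightarrow> nat set" where "U r = fst (upper d A (ennreal \<delta>) r)" for r
  obtain M where M: "\<forall>s\<in>S. finite (U s) \<and> card (U s) \<le> M"
    using uuf[unfolded unif_upper_finite_def, rule_format, OF dp] unfolding U_def by (elim exE)
  have tb: "totally_bounded_wrt d (\<Union>s\<in>S. snd s ` U s)"
    using utb[unfolded upper_tot_bounded_def, rule_format, OF dp] unfolding U_def supp_upper .
  define c where "c = q / (3 * (real M + 1))"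
  have c: "c > 0" using q by (simp add: c_def)
  define \<eta> where "\<eta> = c powr (1/p) / 2"
  have eta: "\<eta> > 0" using c by (simp add: \<eta>_def)
  have eta2: "(\<eta> + \<eta>) powr p = c" using c p by (simp add: \<eta>_def powr_powr)
  have Mc: "real M * c \<le> q / 3"
  proof -
    have "real M * c \<le> (real M + 1) * c" using c by (intro mult_right_mono) auto
    also have "\<dots> = q / 3" unfolding c_def by (simp add: field_simps)
    finally show ?thesis .
  qed
  obtain F where F: "finite F" "F \<subseteq> S" "\<forall>s\<in>S. \<exists>t\<in>F. \<exists>\<psi>. bij_betw \<psi> (U t) (U s) \<and>
           (\<forall>k\<in>U t. d (snd t k) (snd s (\<psi> k)) < ennreal (\<eta> + \<eta>))"
    using G2[OF em M tb eta] by blast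
  show "\<exists>F. finite F \<and> F \<subseteq> S \<and> S \<subseteq> (\<Union>t\<in>F. {s. W_p d A p t s < ennreal \<epsilon>})"
  proof (intro exI[of _ F] conjI subsetI)
    fix s assume s: "s \<in> S"
    from F(3)[rule_format, OF s] obtain t where tF: "t \<in> F" and
      "\<exists>\<psi>. bij_betw \<psi> (U t) (U s) \<and> (\<forall>k\<in>U t. d (snd t k) (snd s (\<psi> k)) < ennreal (\<eta> + \<eta>))" ..
    then obtain \<psi> where t2: "bij_betw \<psi> (U t) (U s)"
      and t3: "\<forall>k\<in>U t. d (snd t k) (snd s (\<psi> k)) < ennreal (\<eta> + \<eta>)" by (elim exE conjE)
    have tS: "t \<in> S" using tF F(2) by (rule subsetD[rotated])
    have tD: "t \<in> diagrams A" and sD: "s \<in> diagrams A" using S tS s by (auto simp: D_p_def)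
    have Lt: "fst t - U t = fst (lower d A (ennreal \<delta>) t)" unfolding U_def by (rule diff_upper[OF tD])
    have Ls: "fst s - U s = fst (lower d A (ennreal \<delta>) s)" unfolding U_def by (rule diff_upper[OF sD])
    have psiU: "\<psi> ` U t = U s" using t2 by (simp add: bij_betw_def)
    have Qt: "Q t (zz t)" by (rule zz[OF tS])
    have Qs: "Q s (zz s)" by (rule zz[OF s])
    have m: "is_matching A t s (U t) \<psi> (zz t) (zz s)"
      unfolding U_def
    proof (rule match_build)
      show "bij_betw \<psi> (fst (upper d A (ennreal \<delta>) t)) (fst (upper d A (ennreal \<delta>) s))" using t2 unfolding U_def .
      show "\<forall>i\<in>fst t - fst (upper d A (ennreal \<delta>) t). zz t i \<in> A"
        using Qt Lt unfolding Q_def U_def by simp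
      show "\<forall>j\<in>fst s - fst (upper d A (ennreal \<delta>) s). zz s j \<in> A"
        using Qs Ls unfolding Q_def U_def by simp
    qed
    have s1: "(\<Sum>\<^sub>\<infinity>k\<in>U t. enn_powr (d (snd t k) (snd s (\<psi> k))) p) \<le> ennreal (real M * c)"
    proof -
      have "(\<Sum>\<^sub>\<infinity>k\<in>U t. enn_powr (d (snd t k) (snd s (\<psi> k))) p) \<le> of_nat (card (U t)) * ennreal c"
      proof (rule infsum_card_le)
        show "finite (U t)" using M tS by blast
        fix k assume "k \<in> U t"
        hence "d (snd t k) (snd s (\<psi> k)) \<le> ennreal (\<eta> + \<eta>)" using t3 by (simp add: less_imp_le)
        from pow_le[OF _ _ this, of p] show "enn_powr (d (snd t k) (snd s (\<psi> k))) p \<le> ennreal c"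
          using p eta eta2 by (simp del: mult_2 mult_2_right)
      qed
      also have "\<dots> \<le> of_nat M * ennreal c" using M tS by (intro mult_right_mono) auto
      also have "\<dots> = ennreal (real M * c)" using c by (simp add: ennreal_mult ennreal_of_nat_eq_real_of_nat)
      finally show ?thesis .
    qed
    have s2: "(\<Sum>\<^sub>\<infinity>i\<in>fst t - U t. enn_powr (d (snd t i) (zz t i)) p) < ennreal (q/3)"
      using Qt unfolding Q_def Lt by simp
    have s3: "(\<Sum>\<^sub>\<infinity>j\<in>fst s - \<psi> ` U t. enn_powr (d (zz s j) (snd s j)) p) < ennreal (q/3)"
    proof -
      have "(\<Sum>\<^sub>\<infinity>j\<in>fst s - \<psi> ` U t. enn_powr (d (zz s j) (snd s j)) p) =
            (\<Sum>\<^sub>\<infinity>j\<in>fst (lower d A (ennreal \<delta>) s). enn_powr (d (snd s j) (zz s j)) p)"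
        unfolding psiU Ls using em_sym[OF em] by simp
      thus ?thesis using Qs unfolding Q_def by simp
    qed
    have "psum d p t s (U t) \<psi> (zz t) (zz s) < ennreal (real M * c + q/3 + q/3)"
      unfolding psum_def
      by (intro ennreal_add_lt ennreal_add_le_lt s1 s2 s3) (use c in simp)
    also have "\<dots> \<le> ennreal (\<epsilon> powr p)" using Mc unfolding q_def by (intro ennreal_leI) simp
    finally have "cost_p d p t s (U t) \<psi> (zz t) (zz s) < ennreal \<epsilon>"
      unfolding cost_p_psum using cost_lt_iff[OF p ep] by simp
    hence "W_p d A p t s < ennreal \<epsilon>" by (rule le_less_trans[OF Wp_le[OF m]])
    thus "s \<in> (\<Union>t\<in>F. {s. W_p d A p t s < ennreal \<epsilon>})" using tF by blast
  qed (use F in auto)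
qed


lemma ennreal_add_lt_le:
  assumes "a < ennreal x" "b \<le> ennreal y" "y \<ge> 0"
  shows "a + b < ennreal (x + y)"
  using ennreal_add_le_lt[OF assms(2) assms(1) assms(3)] by (simp add: add.commute)

lemma sum_two_le:
  fixes a b :: "nat \<Rightarrow> ennreal"
  assumes "B \<subseteq> K" "B \<subseteq> L"
  shows "(\<Sum>\<^sub>\<infinity>k\<in>B. c * (a k + b k)) \<le> c * (infsum a K + infsum b L)"
proof (rule infsum_le_finite_sums)
  show "(\<lambda>k. c * (a k + b k)) summable_on B" by simp
  fix G assume G: "finite G" "G \<subseteq> B"
  have "(\<Sum>k\<in>G. c * (a k + b k)) = c * (sum a G + sum b G)"
    by (simp add: sum_distrib_left sum.distrib distrib_left)
  also have "\<dots> \<le> c * (infsum a K + infsum b L)"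
  proof (intro mult_left_mono add_mono)
    show "sum a G \<le> infsum a K" using G assms infsum_subset_ennreal[of G K a] by simp
    show "sum b G \<le> infsum b L" using G assms infsum_subset_ennreal[of G L b] by simp
  qed simp
  finally show "(\<Sum>k\<in>G. c * (a k + b k)) \<le> c * (infsum a K + infsum b L)" .
qed

lemma partC2:
  assumes mp: "metric_pair d A" and p1: "1 \<le> p" and S: "S \<subseteq> D_p d A p"
    and tb: "totally_bounded_wrt (W_p d A p) S"
  shows "unif_p_vanishing d A p S"
  unfolding unif_p_vanishing_def
proof (intro allI impI)
  fix \<epsilon> :: real assume ep: "\<epsilon> > 0"
  have p: "p > 0" using p1 by simp
  have em: "ext_metric d" using mp by (simp add: metric_pair_def)
  define q where "q = \<epsilon> powr p"
  have q: "q > 0" using ep by (simp add: q_def)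
  define r where "r = q / (4 * 2 powr p)"
  have r: "r > 0" using q by (simp add: r_def)
  define e where "e = r powr (1/p)"
  have e: "e > 0" using r by (simp add: e_def)
  have ep_: "e powr p = r" using r p by (simp add: e_def powr_powr)
  obtain F where F: "finite F" "F \<subseteq> S" "S \<subseteq> (\<Union>t\<in>F. {s. W_p d A p t s < ennreal e})"
    using tb[unfolded totally_bounded_wrt_def, rule_format, OF e] by (elim exE conjE)
  define TP :: "'a diag \<Rightarrow> real \<times> (nat \<Rightarrow> 'a) \<Rightarrow> bool" where
    "TP t x \<longleftrightarrow> fst x > 0 \<and> (\<forall>i\<in>fst (lower d A (ennreal (fst x)) t). snd x i \<in> A) \<and>
      (\<Sum>\<^sub>\<infinity>i\<in>fst (lower d A (ennreal (fst x)) t). enn_powr (d (snd t i) (snd x i)) p) < ennreal r" for t x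
  have "\<forall>t\<in>F. \<exists>x. TP t x"
  proof
    fix t assume "t \<in> F"
    hence tD: "t \<in> D_p d A p" using F(2) S by blast
    obtain \<delta>' \<zeta> where "\<delta>' > 0" "\<forall>i\<in>fst (lower d A (ennreal \<delta>') t). \<zeta> i \<in> A"
      "(\<Sum>\<^sub>\<infinity>i\<in>fst (lower d A (ennreal \<delta>') t). enn_powr (d (snd t i) (\<zeta> i)) p) < ennreal r"
      using Dp_tail[OF mp tD, of "ennreal r"] r by auto
    thus "\<exists>x. TP t x" unfolding TP_def by (intro exI[of _ "(\<delta>', \<zeta>)"]) simp
  qed
  then obtain f where f: "\<forall>t\<in>F. TP t (f t)" by (rule bchoice[elim_format]) blast
  define N where "N = (\<Sum>t\<in>F. card (fst (upper d A (ennreal (fst (f t))) t)))"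
  define \<delta> where "\<delta> = (r / (real N + 1)) powr (1/p)"
  have dp: "\<delta> > 0" using r by (simp add: \<delta>_def)
  have dpp: "\<delta> powr p = r / (real N + 1)" using r p by (simp add: \<delta>_def powr_powr)
  have Nd: "real N * \<delta> powr p \<le> r"
  proof -
    have "real N * \<delta> powr p \<le> (real N + 1) * \<delta> powr p" by (intro mult_right_mono) auto
    also have "\<dots> = r" unfolding dpp by (simp add: field_simps)
    finally show ?thesis .
  qed
  show "\<exists>\<delta>>0. \<forall>\<alpha>\<in>S. W_p d A p (lower d A (ennreal \<delta>) \<alpha>) zero_diag < ennreal \<epsilon>"
  proof (intro exI[of _ \<delta>] conjI ballI)
    show "\<delta> > 0" by (rule dp)
    fix s assume s: "s \<in> S"
    have "s \<in> (\<Union>t\<in>F. {s. W_p d A p t s < ennreal e})" using F(3) s by (rule subsetD)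
    then obtain t where tF: "t \<in> F" and Wts: "W_p d A p t s < ennreal e" by (elim UN_E) simp
    have tS: "t \<in> S" using tF F(2) by (rule subsetD[rotated])
    have tD: "t \<in> diagrams A" and sD: "s \<in> diagrams A" using S tS s by (auto simp: D_p_def)
    have tDp: "t \<in> D_p d A p" using S tS by blast
    obtain K \<phi> z w where m: "is_matching A t s K \<phi> z w" and c: "cost_p d p t s K \<phi> z w < ennreal e"
      using Wp_ltD[OF Wts] by blast
    have mK: "K \<subseteq> fst t" "inj_on \<phi> K" "\<phi> ` K \<subseteq> fst s" "\<forall>j\<in>fst s - \<phi> ` K. w j \<in> A"
      using m by (auto simp: is_matching_def)
    have ps: "psum d p t s K \<phi> z w < ennreal r"
      using c cost_lt_iff[OF p e] ep_ by (simp add: cost_p_psum)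
    have sa: "(\<Sum>\<^sub>\<infinity>k\<in>K. enn_powr (d (snd t k) (snd s (\<phi> k))) p) < ennreal r"
      using ps unfolding psum_def
      by (meson order.strict_trans1 add_increasing2 zero_le order_refl)
    have sb: "(\<Sum>\<^sub>\<infinity>j\<in>fst s - \<phi> ` K. enn_powr (d (w j) (snd s j)) p) < ennreal r"
      using ps unfolding psum_def
      by (meson order.strict_trans1 add_increasing zero_le order_refl)
    define \<delta>' where "\<delta>' = fst (f t)"
    define \<zeta> where "\<zeta> = snd (f t)"
    define Lt where "Lt = fst (lower d A (ennreal \<delta>') t)"
    define Ut where "Ut = fst (upper d A (ennreal \<delta>') t)"
    have TPt: "\<delta>' > 0" "\<forall>i\<in>Lt. \<zeta> i \<in> A"
      "(\<Sum>\<^sub>\<infinity>i\<in>Lt. enn_powr (d (snd t i) (\<zeta> i)) p) < ennreal r"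
      using f tF unfolding TP_def \<delta>'_def \<zeta>_def Lt_def by auto
    have finUt: "finite Ut" unfolding Ut_def by (rule Dp_fin[OF mp p tDp TPt(1)])
    have cardUt: "card Ut \<le> N" unfolding N_def Ut_def \<delta>'_def
      using F(1) tF F(2) S Dp_fin[OF mp p] f unfolding TP_def
      by (intro member_le_sum) auto
    define L where "L = fst (lower d A (ennreal \<delta>) s)"
    define a' :: "nat \<Rightarrow> 'a" where "a' j = (SOME a. a \<in> A \<and> d (snd s j) a < ennreal \<delta>)" for j
    have a': "a' j \<in> A \<and> d (snd s j) (a' j) < ennreal \<delta>" if "j \<in> L" for j
    proof -
      have "setdist d (snd s j) A < ennreal \<delta>" using that by (simp add: L_def lower_mem)
      from setdist_lessD[OF this] obtain a where a: "a \<in> A" "d (snd s j) a < ennreal \<delta>" ..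
      have "a \<in> A \<and> d (snd s j) a < ennreal \<delta>" using a by (rule conjI)
      thus ?thesis unfolding a'_def by (rule someI)
    qed
    define ki where "ki j = inv_into K \<phi> j" for j
    define z' where "z' j = (if j \<in> \<phi> ` K then (if ki j \<in> Lt then \<zeta> (ki j) else a' j) else w j)" for j
    define g where "g j = enn_powr (d (snd s j) (z' j)) p" for j
    have kiphi: "ki (\<phi> k) = k" if "k \<in> K" for k
      unfolding ki_def using mK(2) that by (rule inv_into_f_f)
    have z'A: "\<forall>j\<in>L. z' j \<in> A"
    proof
      fix j assume j: "j \<in> L"
      hence js: "j \<in> fst s" by (simp add: L_def lower_mem)
      show "z' j \<in> A"
      proof (cases "j \<in> \<phi> ` K")
        case True
        then obtain k where k: "k \<in> K" "j = \<phi> k" by blast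
        show ?thesis using True TPt(2) a'[OF j] unfolding z'_def by auto
      next
        case False thus ?thesis using mK(4) js unfolding z'_def by auto
      qed
    qed
    define L1 where "L1 = fst s - \<phi> ` K"
    define B2 where "B2 = K \<inter> Lt"
    define L3 where "L3 = L \<inter> \<phi> ` (K - Lt)"
    have Lsub: "L \<subseteq> (L1 \<union> \<phi> ` B2) \<union> L3"
      unfolding L1_def B2_def L3_def L_def by (auto simp: lower_mem)
    have "infsum g L \<le> infsum g ((L1 \<union> \<phi> ` B2) \<union> L3)" by (rule infsum_subset_ennreal[OF Lsub])
    also have "\<dots> \<le> infsum g (L1 \<union> \<phi> ` B2) + infsum g L3" by (rule infsum_Un_le)
    also have "\<dots> \<le> (infsum g L1 + infsum g (\<phi> ` B2)) + infsum g L3" by (intro add_right_mono infsum_Un_le)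
    finally have split: "infsum g L \<le> infsum g L1 + infsum g (\<phi> ` B2) + infsum g L3" .
    have g1: "infsum g L1 < ennreal r"
    proof -
      have "infsum g L1 = (\<Sum>\<^sub>\<infinity>j\<in>fst s - \<phi> ` K. enn_powr (d (w j) (snd s j)) p)"
        unfolding L1_def by (rule infsum_cong) (simp add: g_def z'_def em_sym[OF em])
      thus ?thesis using sb by simp
    qed
    have g2: "infsum g (\<phi> ` B2) \<le> ennreal (2 powr p * (r + r))"
    proof -
      have injB: "inj_on \<phi> B2" using mK(2) unfolding B2_def by (rule inj_on_subset) auto
      have "infsum g (\<phi> ` B2) = infsum (g \<circ> \<phi>) B2" by (rule infsum_reindex[OF injB])
      also have "\<dots> \<le> (\<Sum>\<^sub>\<infinity>k\<in>B2. ennreal (2 powr p) * (enn_powr (d (snd t k) (snd s (\<phi> k))) p + enn_powr (d (snd t k) (\<zeta> k)) p))"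
      proof (rule infsum_mono_ennreal)
        fix k assume k: "k \<in> B2"
        hence kK: "k \<in> K" "k \<in> Lt" by (auto simp: B2_def)
        have "(g \<circ> \<phi>) k = enn_powr (d (snd s (\<phi> k)) (\<zeta> k)) p"
          using kK kiphi[OF kK(1)] by (simp add: g_def z'_def)
        also have "\<dots> \<le> enn_powr (d (snd t k) (snd s (\<phi> k)) + d (snd t k) (\<zeta> k)) p"
        proof (rule ep_mono)
          have "d (snd s (\<phi> k)) (\<zeta> k) \<le> d (snd s (\<phi> k)) (snd t k) + d (snd t k) (\<zeta> k)" by (rule em_tri[OF em])
          thus "d (snd s (\<phi> k)) (\<zeta> k) \<le> d (snd t k) (snd s (\<phi> k)) + d (snd t k) (\<zeta> k)"
            using em_sym[OF em, of "snd s (\<phi> k)" "snd t k"] by simp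
        qed (use p in simp)
        also have "\<dots> \<le> ennreal (2 powr p) * (enn_powr (d (snd t k) (snd s (\<phi> k))) p + enn_powr (d (snd t k) (\<zeta> k)) p)"
          by (rule pow_tri[OF p])
        finally show "(g \<circ> \<phi>) k \<le> ennreal (2 powr p) * (enn_powr (d (snd t k) (snd s (\<phi> k))) p + enn_powr (d (snd t k) (\<zeta> k)) p)" .
      qed
      also have "\<dots> \<le> ennreal (2 powr p) * ((\<Sum>\<^sub>\<infinity>k\<in>K. enn_powr (d (snd t k) (snd s (\<phi> k))) p) + (\<Sum>\<^sub>\<infinity>k\<in>Lt. enn_powr (d (snd t k) (\<zeta> k)) p))"
        by (rule sum_two_le) (auto simp: B2_def)
      also have "\<dots> \<le> ennreal (2 powr p) * ennreal (r + r)"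
        using less_imp_le[OF ennreal_add_lt[OF sa TPt(3)]] by (rule mult_left_mono) simp
      also have "\<dots> = ennreal (2 powr p * (r + r))" using r by (simp add: ennreal_mult)
      finally show ?thesis .
    qed
    have g3: "infsum g L3 \<le> ennreal r"
    proof -
      have KU: "K - Lt \<subseteq> Ut"
        using mK(1) diag_notin[OF tD] unfolding Lt_def Ut_def by (auto simp: lower_mem upper_mem)
      have finK: "finite (K - Lt)" using KU finUt by (rule finite_subset)
      have L3s: "L3 \<subseteq> \<phi> ` (K - Lt)" unfolding L3_def by blast
      have finL3: "finite L3" using L3s finK by (meson finite_imageI finite_subset)
      have "card L3 \<le> card (\<phi> ` (K - Lt))" using L3s finK by (intro card_mono) auto
      also have "\<dots> \<le> card (K - Lt)" using finK by (rule card_image_le)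
      also have "\<dots> \<le> card Ut" using KU finUt by (rule card_mono[rotated])
      finally have cL3: "card L3 \<le> N" using cardUt by linarith
      have "infsum g L3 \<le> of_nat (card L3) * ennreal (\<delta> powr p)"
      proof (rule infsum_card_le[OF finL3])
        fix j assume j: "j \<in> L3"
        then obtain k where k: "k \<in> K" "k \<notin> Lt" "j = \<phi> k" "j \<in> L" unfolding L3_def by blast
        have "z' j = a' j" using k kiphi[OF k(1)] by (simp add: z'_def)
        hence "d (snd s j) (z' j) \<le> ennreal \<delta>" using a'[OF k(4)] by (simp add: less_imp_le)
        thus "g j \<le> ennreal (\<delta> powr p)" unfolding g_def using p dp by (intro pow_le) auto
      qed
      also have "\<dots> \<le> of_nat N * ennreal (\<delta> powr p)" using cL3 by (intro mult_right_mono) auto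
      also have "\<dots> = ennreal (real N * \<delta> powr p)" by (simp add: ennreal_mult ennreal_of_nat_eq_real_of_nat)
      also have "\<dots> \<le> ennreal r" using Nd by (rule ennreal_leI)
      finally show ?thesis .
    qed
    have "infsum g L < ennreal (2 powr p * (r + r) + r + r)"
    proof -
      have "infsum g L1 + infsum g (\<phi> ` B2) < ennreal (2 powr p * (r + r) + r)"
        using g2 g1 by (subst add.commute) (rule ennreal_add_le_lt, auto intro: ennreal_leI simp: r less_imp_le)
      from ennreal_add_lt_le[OF this g3 less_imp_le[OF r]]
      have "infsum g L1 + infsum g (\<phi> ` B2) + infsum g L3 < ennreal (2 powr p * (r + r) + r + r)" .
      thus ?thesis using split by (rule order.strict_trans1[rotated])
    qed
    also have "\<dots> \<le> ennreal (\<epsilon> powr p)"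
    proof (rule ennreal_leI)
      have "1 \<le> 2 powr p" by (rule ge_one_powr_ge_zero) (use p in auto)
      hence "r + r \<le> 2 powr p * (r + r)" using r by (simp add: mult_le_cancel_right1 less_imp_le)
      hence "2 powr p * (r + r) + r + r \<le> 4 * 2 powr p * r" by (simp add: algebra_simps)
      also have "\<dots> = q" unfolding r_def by simp
      finally show "2 powr p * (r + r) + r + r \<le> \<epsilon> powr p" by (simp add: q_def)
    qed
    finally have "infsum g L < ennreal (\<epsilon> powr p)" .
    hence "enn_powr (\<Sum>\<^sub>\<infinity>i\<in>fst (lower d A (ennreal \<delta>) s). enn_powr (d (snd (lower d A (ennreal \<delta>) s) i) (z' i)) p) (1/p) < ennreal \<epsilon>"
      using cost_lt_iff[OF p ep] unfolding L_def g_def by simp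
    moreover have "W_p d A p (lower d A (ennreal \<delta>) s) zero_diag \<le> enn_powr (\<Sum>\<^sub>\<infinity>i\<in>fst (lower d A (ennreal \<delta>) s). enn_powr (d (snd (lower d A (ennreal \<delta>) s) i) (z' i)) p) (1/p)"
      by (rule Wp_zero_le) (use z'A in \<open>simp add: L_def\<close>)
    ultimately show "W_p d A p (lower d A (ennreal \<delta>) s) zero_diag < ennreal \<epsilon>"
      by (rule order.strict_trans1[rotated])
  qed
qed


theorem theorem7p29:
  fixes d :: "'a \<Rightarrow> 'a \<Rightarrow> ennreal" and A :: "'a set"
  assumes "metric_pair d A"
  shows "(\<forall>S. S \<subseteq> D_inf d A \<longrightarrow>
            (totally_bounded_wrt (W_inf d A) S \<longleftrightarrow>
               unif_upper_finite d A S \<and> upper_tot_bounded d A S))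
       \<and> (\<forall>p::real. \<forall>S. 1 \<le> p \<longrightarrow> S \<subseteq> D_p d A p \<longrightarrow>
            (totally_bounded_wrt (W_p d A p) S \<longleftrightarrow>
               unif_upper_finite d A S \<and> upper_tot_bounded d A S \<and> unif_p_vanishing d A p S))"
proof (intro conjI allI impI)
  fix S assume S: "S \<subseteq> D_inf d A"
  show "totally_bounded_wrt (W_inf d A) S \<longleftrightarrow> unif_upper_finite d A S \<and> upper_tot_bounded d A S"
    using partA[OF assms S] partB[OF assms S] by blast
next
  fix p :: real and S assume p1: "1 \<le> p" and S: "S \<subseteq> D_p d A p"
  have p: "p > 0" using p1 by simp
  show "totally_bounded_wrt (W_p d A p) S \<longleftrightarrow>
      unif_upper_finite d A S \<and> upper_tot_bounded d A S \<and> unif_p_vanishing d A p S"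
    using partC1[OF assms p S] partC2[OF assms p1 S] partD[OF assms p1 S] by blast
qed


end
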